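(* Fix $a\ge0$, $b>0$ and $N\ge2$. Then for all $M$ large enough, $$P_o(\xi_t\ne\mathbf 0\ \forall t>0)\le\begin{cases}M^{-1/3}\big(1/2+bN(1-a/4)^{-1}\big)&\text{if }a<4,\\ M^{-1/3}\big(1/2+(b/2)(N+2)^2\big)&\text{if }a=4,\\ M^{-1/3}\big(1/2+b(a/4-1)^{-2}(a/4)^{N+2}\big)&\text{if }a>4.\end{cases}$$
   Context: For $x,y\in\mathbb Z$ write $y\sim x$ iff $0<|x-y|\le M$. The $N$-patch model (patch size $N\ge2$, inner birth rate $a$, outer birth rate $b$, dispersal range $M$) is the continuous-time Markov process $\xi_t\in\{0,1,\dots,N\}^{\mathbb Z}$ with transitions: $\xi(x)\to\xi(x)-1$ at rate $\xi(x)$, and $\xi(x)\to\xi(x)+1$ at rate $$\frac{a}{N(N-1)}\xi(x)(\xi(x)-1)(N-\xi(x))+\sum_{y\sim x}\frac{b}{2M\,N(N-1)}\xi(y)(\xi(y)-1)(N-\xi(x)).$$ $\mathbf 0$ is the all-empty configuration, and $P_o$ is the law of the process started from $\xi_0(0)=N$, $\xi_0(x)=0$ for $x\neq0$. *)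

theory Defs
  imports Complex_Main
begin

text \<open>Configurations are maps int => nat. The N-patch model is encoded through its
embedded jump chain.\<close>

definition death_rate :: "(int \<Rightarrow> nat) \<Rightarrow> int \<Rightarrow> real" where
  "death_rate \<xi> x = real (\<xi> x)"

definition birth_rate :: "nat \<Rightarrow> real \<Rightarrow> real \<Rightarrow> nat \<Rightarrow> (int \<Rightarrow> nat) \<Rightarrow> int \<Rightarrow> real" where
  "birth_rate N a b M \<xi> x =
     a / (real N * (real N - 1)) * real (\<xi> x) * (real (\<xi> x) - 1) * (real N - real (\<xi> x))
   + (\<Sum>y\<in>{y. 0 < \<bar>x - y\<bar> \<and> \<bar>x - y\<bar> \<le> int M}.
        b / (2 * real M * real N * (real N - 1)) * real (\<xi> y) * (real (\<xi> y) - 1)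
          * (real N - real (\<xi> x)))"

text \<open>Sites where some transition can have positive rate: within distance M of an occupied site.\<close>
definition active_sites :: "nat \<Rightarrow> (int \<Rightarrow> nat) \<Rightarrow> int set" where
  "active_sites M \<xi> = {x. \<exists>y. \<xi> y \<noteq> 0 \<and> \<bar>x - y\<bar> \<le> int M}"

definition total_rate :: "nat \<Rightarrow> real \<Rightarrow> real \<Rightarrow> nat \<Rightarrow> (int \<Rightarrow> nat) \<Rightarrow> real" where
  "total_rate N a b M \<xi> = (\<Sum>x\<in>active_sites M \<xi>. death_rate \<xi> x + birth_rate N a b M \<xi> x)"

primrec survive_steps :: "nat \<Rightarrow> nat \<Rightarrow> real \<Rightarrow> real \<Rightarrow> nat \<Rightarrow> (int \<Rightarrow> nat) \<Rightarrow> real" where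
  "survive_steps 0 N a b M \<xi> = (if \<xi> = (\<lambda>_. 0) then 0 else 1)"
| "survive_steps (Suc n) N a b M \<xi> =
     (if \<xi> = (\<lambda>_. 0) then 0 else
       (\<Sum>x\<in>active_sites M \<xi>.
          death_rate \<xi> x / total_rate N a b M \<xi> * survive_steps n N a b M (\<xi>(x := \<xi> x - 1))
        + birth_rate N a b M \<xi> x / total_rate N a b M \<xi> * survive_steps n N a b M (\<xi>(x := Suc (\<xi> x)))))"

definition init_config :: "nat \<Rightarrow> int \<Rightarrow> nat" where
  "init_config N = (\<lambda>x. if x = 0 then N else 0)"

text \<open>P_o(xi_t /= 0 for all t > 0) = probability that the jump chain never hits 0.\<close>
definition survival_prob :: "nat \<Rightarrow> real \<Rightarrow> real \<Rightarrow> nat \<Rightarrow> real" where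
  "survival_prob N a b M = (INF n. survive_steps n N a b M (init_config N))"

end

theory Submission
  imports Defs
begin

definition valid :: "nat \<Rightarrow> (int \<Rightarrow> nat) \<Rightarrow> bool" where
  "valid N \<xi> \<longleftrightarrow> finite {x. \<xi> x \<noteq> 0} \<and> (\<forall>x. \<xi> x \<le> N)"

definition good :: "nat \<Rightarrow> (int \<Rightarrow> nat) \<Rightarrow> bool" where
  "good N \<xi> \<longleftrightarrow> finite {x. \<xi> x \<noteq> 0} \<and> \<xi> 0 \<le> N \<and> (\<forall>x. x \<noteq> 0 \<longrightarrow> \<xi> x \<le> 1)"

definition sing :: "(int \<Rightarrow> nat) \<Rightarrow> int set" where
  "sing \<xi> = {x. x \<noteq> 0 \<and> \<xi> x \<noteq> 0}"

definition psi :: "real \<Rightarrow> nat \<Rightarrow> nat \<Rightarrow> real" where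
  "psi a N k = (a+2)^N - (a+2)^(N-k)"

definition Phi :: "nat \<Rightarrow> real \<Rightarrow> real \<Rightarrow> real \<Rightarrow> real \<Rightarrow> (int \<Rightarrow> nat) \<Rightarrow> real" where
  "Phi N a al be v \<xi> = (if good N \<xi> then al * real (card (sing \<xi>)) + be * psi a N (\<xi> 0) else v)"

definition Pop :: "nat \<Rightarrow> real \<Rightarrow> real \<Rightarrow> nat \<Rightarrow> ((int \<Rightarrow> nat) \<Rightarrow> real) \<Rightarrow> (int \<Rightarrow> nat) \<Rightarrow> real" where
  "Pop N a b M g \<xi> = (\<Sum>x\<in>active_sites M \<xi>.
      death_rate \<xi> x / total_rate N a b M \<xi> * g (\<xi>(x := \<xi> x - 1))
    + birth_rate N a b M \<xi> x / total_rate N a b M \<xi> * g (\<xi>(x := Suc (\<xi> x))))"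

lemma finite_active:
  assumes "finite {x. \<xi> x \<noteq> 0}"
  shows "finite (active_sites M \<xi>)"
proof -
  have "active_sites M \<xi> \<subseteq> (\<Union>y\<in>{x. \<xi> x \<noteq> 0}. {y - int M .. y + int M})"
    unfolding active_sites_def by (fastforce simp: abs_le_iff)
  moreover have "finite (\<Union>y\<in>{x. \<xi> x \<noteq> 0}. {y - int M .. y + int M})"
    using assms by auto
  ultimately show ?thesis by (rule finite_subset)
qed

lemma nat_sq_nonneg: "0 \<le> real n * (real n - 1)"
  by (cases n) auto

lemma prod3_nonneg:
  assumes "0 \<le> (c::real)" "0 \<le> n * (n - 1)" "0 \<le> z"
  shows "0 \<le> c * n * (n - 1) * z"
proof -
  have "c * n * (n - 1) * z = c * (n * (n - 1)) * z" by (simp add: mult.assoc)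
  also have "... \<ge> 0" using assms by simp
  finally show ?thesis .
qed

lemma birth_nonneg:
  assumes "a \<ge> 0" "b \<ge> 0" "N \<ge> 2" "\<xi> x \<le> N"
  shows "0 \<le> birth_rate N a b M \<xi> x"
proof -
  have N1: "real N - 1 \<ge> 0" using assms by simp
  have h1: "0 \<le> a / (real N * (real N - 1)) * real (\<xi> x) * (real (\<xi> x) - 1) * (real N - real (\<xi> x))"
    using assms N1 by (intro prod3_nonneg nat_sq_nonneg) auto
  have h2: "0 \<le> b / (2 * real M * real N * (real N - 1)) * real (\<xi> y) * (real (\<xi> y) - 1)
          * (real N - real (\<xi> x))" for y
    using assms N1 by (intro prod3_nonneg nat_sq_nonneg) auto
  show ?thesis unfolding birth_rate_def
    using h1 h2 by (intro add_nonneg_nonneg sum_nonneg) auto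
qed

lemma birth_full:
  assumes "\<xi> x = N"
  shows "birth_rate N a b M \<xi> x = 0"
  unfolding birth_rate_def using assms by simp

lemma valid_dec:
  assumes "valid N \<xi>"
  shows "valid N (\<xi>(x := \<xi> x - 1))"
proof -
  have "{y. (\<xi>(x := \<xi> x - 1)) y \<noteq> 0} \<subseteq> {y. \<xi> y \<noteq> 0}" by auto
  then have "finite {y. (\<xi>(x := \<xi> x - 1)) y \<noteq> 0}"
    using assms unfolding valid_def by (meson finite_subset)
  moreover have "\<forall>y. (\<xi>(x := \<xi> x - 1)) y \<le> N"
    using assms unfolding valid_def by (metis diff_le_self fun_upd_apply order_trans)
  ultimately show ?thesis unfolding valid_def by blast
qed

lemma valid_inc:
  assumes "valid N \<xi>" "\<xi> x < N"
  shows "valid N (\<xi>(x := Suc (\<xi> x)))"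
proof -
  have "{y. (\<xi>(x := Suc (\<xi> x))) y \<noteq> 0} \<subseteq> insert x {y. \<xi> y \<noteq> 0}" by auto
  then have "finite {y. (\<xi>(x := Suc (\<xi> x))) y \<noteq> 0}"
    using assms unfolding valid_def by (meson finite_subset finite_insert)
  moreover have "\<forall>y. (\<xi>(x := Suc (\<xi> x))) y \<le> N"
    using assms unfolding valid_def by simp
  ultimately show ?thesis unfolding valid_def by blast
qed

lemma survive_zero: "survive_steps n N a b M (\<lambda>_. 0) = 0"
  by (cases n) auto

lemma survive_Suc:
  "\<xi> \<noteq> (\<lambda>_. 0) \<Longrightarrow> survive_steps (Suc n) N a b M \<xi> = Pop N a b M (survive_steps n N a b M) \<xi>"
  by (simp add: Pop_def)

lemma Pop_lin:
  "Pop N a b M (\<lambda>\<eta>. g \<eta> + c * g' \<eta>) \<xi> = Pop N a b M g \<xi> + c * Pop N a b M g' \<xi>"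
  by (simp add: Pop_def sum.distrib sum_distrib_left algebra_simps)

lemma Pop_gen:
  assumes "total_rate N a b M \<xi> \<noteq> 0"
  shows "Pop N a b M g \<xi> = g \<xi> + (\<Sum>x\<in>active_sites M \<xi>.
      death_rate \<xi> x * (g (\<xi>(x := \<xi> x - 1)) - g \<xi>)
    + birth_rate N a b M \<xi> x * (g (\<xi>(x := Suc (\<xi> x))) - g \<xi>)) / total_rate N a b M \<xi>"
proof -
  let ?R = "total_rate N a b M \<xi>"
  have e1: "(\<Sum>x\<in>active_sites M \<xi>.
      death_rate \<xi> x * (g (\<xi>(x := \<xi> x - 1)) - g \<xi>)
    + birth_rate N a b M \<xi> x * (g (\<xi>(x := Suc (\<xi> x))) - g \<xi>))
   = (\<Sum>x\<in>active_sites M \<xi>.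
      death_rate \<xi> x * g (\<xi>(x := \<xi> x - 1))
    + birth_rate N a b M \<xi> x * g (\<xi>(x := Suc (\<xi> x)))) - g \<xi> * ?R"
    unfolding total_rate_def
    by (simp add: sum_subtractf sum.distrib sum_distrib_left algebra_simps)
  have e2: "Pop N a b M g \<xi> = (\<Sum>x\<in>active_sites M \<xi>.
      death_rate \<xi> x * g (\<xi>(x := \<xi> x - 1))
    + birth_rate N a b M \<xi> x * g (\<xi>(x := Suc (\<xi> x)))) / ?R"
    unfolding Pop_def by (simp add: sum_divide_distrib add_divide_distrib)
  show ?thesis using assms unfolding e1 e2 by (simp add: field_simps)
qed

locale setting =
  fixes N :: nat and a b :: real and M :: nat
  assumes a0: "a \<ge> 0" and b0: "b > 0" and N2: "N \<ge> 2" and M1: "M \<ge> 1"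
begin

lemma total_pos:
  assumes "valid N \<xi>" "\<xi> \<noteq> (\<lambda>_. 0)"
  shows "0 < total_rate N a b M \<xi>"
proof -
  obtain z where z: "\<xi> z \<noteq> 0" using assms(2) by auto
  have fin: "finite (active_sites M \<xi>)" using assms(1) finite_active unfolding valid_def by auto
  have zA: "z \<in> active_sites M \<xi>" unfolding active_sites_def using z by force
  have nn: "\<forall>x\<in>active_sites M \<xi>. 0 \<le> death_rate \<xi> x + birth_rate N a b M \<xi> x"
    using birth_nonneg[OF a0 _ N2] b0 assms(1) unfolding valid_def death_rate_def
    by (simp add: add_nonneg_nonneg less_imp_le)
  have "death_rate \<xi> z + birth_rate N a b M \<xi> z \<le> total_rate N a b M \<xi>"
    unfolding total_rate_def using zA nn fin by (intro member_le_sum) auto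
  moreover have "0 < death_rate \<xi> z + birth_rate N a b M \<xi> z"
    using birth_nonneg[OF a0 less_imp_le[OF b0] N2, where \<xi>=\<xi> and x=z and M=M] b0 assms(1) z
    unfolding valid_def death_rate_def by (simp add: add_pos_nonneg)
  ultimately show ?thesis by linarith
qed

lemma Pop_mono:
  assumes "valid N \<xi>" "\<And>\<eta>. valid N \<eta> \<Longrightarrow> g \<eta> \<le> g' \<eta>"
  shows "Pop N a b M g \<xi> \<le> Pop N a b M g' \<xi>"
proof -
  have R: "0 \<le> total_rate N a b M \<xi>"
    unfolding total_rate_def using birth_nonneg[OF a0 _ N2] b0 assms(1) unfolding valid_def death_rate_def
    by (intro sum_nonneg add_nonneg_nonneg) auto
  show ?thesis unfolding Pop_def
  proof (rule sum_mono, rule add_mono)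
    fix x
    show "death_rate \<xi> x / total_rate N a b M \<xi> * g (\<xi>(x := \<xi> x - 1))
        \<le> death_rate \<xi> x / total_rate N a b M \<xi> * g' (\<xi>(x := \<xi> x - 1))"
      using R assms valid_dec[OF assms(1)] unfolding death_rate_def
      by (intro mult_left_mono) auto
    show "birth_rate N a b M \<xi> x / total_rate N a b M \<xi> * g (\<xi>(x := Suc (\<xi> x)))
        \<le> birth_rate N a b M \<xi> x / total_rate N a b M \<xi> * g' (\<xi>(x := Suc (\<xi> x)))"
    proof (cases "\<xi> x < N")
      case True
      then show ?thesis
        using R assms valid_inc[OF assms(1) True] birth_nonneg[OF a0 less_imp_le[OF b0] N2, where \<xi>=\<xi> and x=x] b0
        by (intro mult_left_mono) auto
    next
      case False
      then have "\<xi> x = N" using assms(1) unfolding valid_def by (meson le_antisym not_less)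
      then show ?thesis by (simp add: birth_full)
    qed
  qed
qed

lemma Pop_const:
  assumes "valid N \<xi>" "\<xi> \<noteq> (\<lambda>_. 0)"
  shows "Pop N a b M (\<lambda>_. c) \<xi> = c"
  using Pop_gen[of N a b M \<xi> "\<lambda>_. c"] total_pos[OF assms] by simp

lemma survive_bounds:
  assumes "valid N \<xi>"
  shows "0 \<le> survive_steps n N a b M \<xi> \<and> survive_steps n N a b M \<xi> \<le> 1"
  using assms
proof (induction n arbitrary: \<xi>)
  case 0
  then show ?case by simp
next
  case (Suc n)
  show ?case
  proof (cases "\<xi> = (\<lambda>_. 0)")
    case True
    then show ?thesis by (simp add: survive_zero)
  next
    case False
    have "Pop N a b M (\<lambda>_. 0) \<xi> \<le> Pop N a b M (survive_steps n N a b M) \<xi>"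
      using Suc by (intro Pop_mono) auto
    moreover have "Pop N a b M (survive_steps n N a b M) \<xi> \<le> Pop N a b M (\<lambda>_. 1) \<xi>"
      using Suc by (intro Pop_mono) auto
    ultimately show ?thesis using Pop_const[OF Suc.prems False] survive_Suc[OF False] by simp
  qed
qed

end

definition ck :: "nat \<Rightarrow> real \<Rightarrow> nat \<Rightarrow> nat \<Rightarrow> real" where
  "ck N b M k = b / (2 * real M * real N * (real N - 1)) * real k * (real k - 1)"

definition uk :: "nat \<Rightarrow> real \<Rightarrow> nat \<Rightarrow> real" where
  "uk N a k = a / (real N * (real N - 1)) * real k * (real k - 1) * (real N - real k)"

lemma good_valid: "good N \<xi> \<Longrightarrow> N \<ge> 1 \<Longrightarrow> valid N \<xi>"
  unfolding good_def valid_def by (metis le_trans)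

lemma good_01: "good N \<xi> \<Longrightarrow> y \<noteq> 0 \<Longrightarrow> \<xi> y = 0 \<or> \<xi> y = 1"
  unfolding good_def by (metis le_neq_implies_less less_one)

lemma sq01: "(n::nat) = 0 \<or> n = 1 \<Longrightarrow> real n * (real n - 1) = 0"
  by auto

lemma birth0:
  assumes "good N \<xi>"
  shows "birth_rate N a b M \<xi> 0 = uk N a (\<xi> 0)"
proof -
  have "\<forall>y\<in>{y. 0 < \<bar>0 - y\<bar> \<and> \<bar>0 - y\<bar> \<le> int M}.
        b / (2 * real M * real N * (real N - 1)) * real (\<xi> y) * (real (\<xi> y) - 1)
          * (real N - real (\<xi> 0)) = 0"
  proof
    fix y assume "y \<in> {y. 0 < \<bar>0 - y\<bar> \<and> \<bar>0 - y\<bar> \<le> int M}"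
    then have "y \<noteq> 0" by auto
    then show "b / (2 * real M * real N * (real N - 1)) * real (\<xi> y) * (real (\<xi> y) - 1)
          * (real N - real (\<xi> 0)) = 0" using good_01[OF assms] by auto
  qed
  from sum.neutral[OF this] show ?thesis unfolding birth_rate_def uk_def by simp
qed

lemma birthx:
  assumes "good N \<xi>" "x \<noteq> 0"
  shows "birth_rate N a b M \<xi> x = (if \<bar>x\<bar> \<le> int M then ck N b M (\<xi> 0) * (real N - real (\<xi> x)) else 0)"
proof -
  let ?S = "{y. 0 < \<bar>x - y\<bar> \<and> \<bar>x - y\<bar> \<le> int M}"
  let ?t = "\<lambda>y. b / (2 * real M * real N * (real N - 1)) * real (\<xi> y) * (real (\<xi> y) - 1)
          * (real N - real (\<xi> x))"
  have fin: "finite ?S" by (rule finite_subset[of _ "{x - int M .. x + int M}"]) auto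
  have t0: "?t y = 0" if "y \<noteq> 0" for y
    using good_01[OF assms(1) that] by auto
  have "sum ?t ?S = sum (\<lambda>y. if y = 0 then ?t 0 else 0) ?S"
    using t0 by (intro sum.cong) auto
  also have "... = (if 0 \<in> ?S then ?t 0 else 0)"
    using fin by (simp add: sum.delta)
  also have "... = (if \<bar>x\<bar> \<le> int M then ck N b M (\<xi> 0) * (real N - real (\<xi> x)) else 0)"
    using assms(2) by (simp add: ck_def)
  finally have s: "sum ?t ?S = (if \<bar>x\<bar> \<le> int M then ck N b M (\<xi> 0) * (real N - real (\<xi> x)) else 0)" .
  have "a / (real N * (real N - 1)) * real (\<xi> x) * (real (\<xi> x) - 1) * (real N - real (\<xi> x)) = 0"
    using good_01[OF assms] by auto
  then show ?thesis unfolding birth_rate_def using s by simp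
qed

lemma ck_nonneg: "b \<ge> 0 \<Longrightarrow> N \<ge> 2 \<Longrightarrow> 0 \<le> ck N b M k"
  unfolding ck_def using nat_sq_nonneg[of k]
  by (simp add: mult.assoc)

lemma ck_small: "k \<le> 1 \<Longrightarrow> ck N b M k = 0"
proof -
  assume "k \<le> 1" then have "k = 0 \<or> k = 1" by auto
  then show ?thesis unfolding ck_def by auto
qed

lemma kk_le:
  assumes "k \<le> N" "N \<ge> 1"
  shows "real k * (real k - 1) \<le> real N * (real N - 1)"
proof (cases "k = 0")
  case True then show ?thesis using assms by simp
next
  case False
  then have "real k - 1 \<ge> 0" by simp
  then show ?thesis using assms by (intro mult_mono) auto
qed

lemma ck_le:
  assumes "b \<ge> 0" "N \<ge> 2" "M \<ge> 1" "k \<le> N"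
  shows "ck N b M k \<le> b / (2 * real M)"
proof -
  have N1: "real N * (real N - 1) > 0" using assms by simp
  have kk: "real k * (real k - 1) \<le> real N * (real N - 1)"
    using assms kk_le by simp
  have "ck N b M k = b / (2 * real M) * (real k * (real k - 1) / (real N * (real N - 1)))"
    unfolding ck_def by (simp add: field_simps)
  also have "... \<le> b / (2 * real M) * 1"
  proof (rule mult_left_mono)
    show "real k * (real k - 1) / (real N * (real N - 1)) \<le> 1"
      using N1 kk by simp
    show "0 \<le> b / (2 * real M)" using assms by simp
  qed
  finally show ?thesis by simp
qed

lemma uk_bounds:
  assumes "a \<ge> 0" "N \<ge> 2" "k \<le> N"
  shows "0 \<le> uk N a k \<and> uk N a k \<le> a * real k"
proof (cases "k = 0")
  case True then show ?thesis unfolding uk_def by simp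
next
  case False
  have N1: "real N * (real N - 1) > 0" using assms by simp
  define r where "r = ((real k - 1) * (real N - real k)) / (real N * (real N - 1))"
  have e: "uk N a k = a * real k * r"
    unfolding uk_def r_def by (simp add: field_simps)
  have p1: "0 \<le> real k - 1" "0 \<le> real N - real k" using False assms by auto
  have "(real k - 1) * (real N - real k) \<le> real N * (real N - 1)"
    using p1 False assms by (intro mult_mono) auto
  then have r1: "r \<le> 1" unfolding r_def using N1 by simp
  have r0: "0 \<le> r" unfolding r_def using p1 N1 by simp
  have ak: "0 \<le> a * real k" using assms by simp
  have "a * real k * r \<le> a * real k * 1" using r1 ak by (rule mult_left_mono)
  then show ?thesis using e ak r0 by simp
qed

lemma uk_N: "uk N a N = 0" unfolding uk_def by simp

lemma psi_nonneg: "a \<ge> 0 \<Longrightarrow> 0 \<le> psi a N k"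
  unfolding psi_def by (simp add: power_increasing)

lemma psi_drift:
  assumes "a \<ge> 0" "N \<ge> 2" "1 \<le> k" "k \<le> N"
  shows "real k * (psi a N (k - 1) - psi a N k) + uk N a k * (psi a N (k + 1) - psi a N k) \<le> -2"
proof (cases "k = N")
  case True
  have nn: "N - (N - 1) = 1" using assms by simp
  have "psi a N (k - 1) - psi a N k = -(a+1)"
    unfolding psi_def using True nn by simp
  then have h: "real k * (psi a N (k - 1) - psi a N k) = real N * (-(a+1))" using True by (simp only:)
  moreover have "real N * (a+1) \<ge> 2 * 1" using assms by (intro mult_mono) auto
  moreover have "uk N a k = 0" using True uk_N by simp
  ultimately show ?thesis by (simp only: mult_minus_right)
next
  case False
  define q where "q = (a+2)^(N-k-1)"
  have q1: "q \<ge> 1" unfolding q_def using assms by simp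
  have d1: "N - k = Suc (N-k-1)" using False assms by simp
  have d2: "N - (k-1) = Suc (Suc (N-k-1))" using False assms by simp
  have d3: "N - (k+1) = N-k-1" by simp
  have e1: "(a+2)^(N-k) = (a+2)*q" unfolding q_def by (subst d1) simp
  have e2: "(a+2)^(N-(k-1)) = (a+2)*((a+2)*q)" unfolding q_def by (subst d2) simp
  have e3: "(a+2)^(N-(k+1)) = q" unfolding q_def by (subst d3) simp
  have "real k * (psi a N (k - 1) - psi a N k) + uk N a k * (psi a N (k + 1) - psi a N k)
      = (a+1) * q * (uk N a k - real k * (a+2))"
    unfolding psi_def using e1 e2 e3 by (simp add: algebra_simps)
  also have "... \<le> (a+1) * q * (-2 * real k)"
  proof (rule mult_left_mono)
    show "uk N a k - real k * (a + 2) \<le> -2 * real k"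
      using uk_bounds[OF assms(1,2,4)] by (simp add: algebra_simps)
    show "0 \<le> (a + 1) * q" using q1 assms by simp
  qed
  also have "... \<le> -2"
  proof -
    have "1 * 1 * 1 \<le> (a+1) * q * real k" using q1 assms
      by (intro mult_mono) auto
    then show ?thesis by simp
  qed
  finally show ?thesis .
qed

lemma good_fin_sing: "good N \<xi> \<Longrightarrow> finite (sing \<xi>)"
  unfolding good_def sing_def by (auto intro: finite_subset)

lemma good_upd0:
  assumes "good N \<xi>" "j \<le> N"
  shows "good N (\<xi>(0 := j)) \<and> sing (\<xi>(0 := j)) = sing \<xi>"
proof -
  have "{y. (\<xi>(0 := j)) y \<noteq> 0} \<subseteq> insert 0 {y. \<xi> y \<noteq> 0}" by auto
  then have "finite {y. (\<xi>(0 := j)) y \<noteq> 0}" using assms unfolding good_def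
    by (meson finite_insert finite_subset)
  then show ?thesis using assms unfolding good_def sing_def by auto
qed

lemma good_kill:
  assumes "good N \<xi>" "x \<noteq> 0"
  shows "good N (\<xi>(x := 0)) \<and> sing (\<xi>(x := 0)) = sing \<xi> - {x}"
proof -
  have "{y. (\<xi>(x := 0)) y \<noteq> 0} \<subseteq> {y. \<xi> y \<noteq> 0}" by auto
  then have "finite {y. (\<xi>(x := 0)) y \<noteq> 0}" using assms unfolding good_def
    by (meson finite_subset)
  then show ?thesis using assms unfolding good_def sing_def by auto
qed

lemma good_born:
  assumes "good N \<xi>" "x \<noteq> 0"
  shows "good N (\<xi>(x := 1)) \<and> sing (\<xi>(x := 1)) = insert x (sing \<xi>)"
proof -
  have "{y. (\<xi>(x := 1)) y \<noteq> 0} \<subseteq> insert x {y. \<xi> y \<noteq> 0}" by auto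
  then have "finite {y. (\<xi>(x := 1)) y \<noteq> 0}" using assms unfolding good_def
    by (meson finite_insert finite_subset)
  then show ?thesis using assms unfolding good_def sing_def by auto
qed

lemma not_good2: "x \<noteq> 0 \<Longrightarrow> \<not> good N (\<xi>(x := 2))"
  unfolding good_def by auto

lemma Phi_nonneg: "a \<ge> 0 \<Longrightarrow> al \<ge> 0 \<Longrightarrow> be \<ge> 0 \<Longrightarrow> v \<ge> 0 \<Longrightarrow> 0 \<le> Phi N a al be v \<xi>"
  unfolding Phi_def using psi_nonneg[of a N] by auto

context setting
begin

definition site :: "real \<Rightarrow> real \<Rightarrow> real \<Rightarrow> real \<Rightarrow> (int \<Rightarrow> nat) \<Rightarrow> int \<Rightarrow> real" where
  "site al be v c \<xi> x =
     death_rate \<xi> x * (Phi N a al be v (\<xi>(x := \<xi> x - 1)) - Phi N a al be v \<xi>)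
   + birth_rate N a b M \<xi> x * (Phi N a al be v (\<xi>(x := Suc (\<xi> x))) - Phi N a al be v \<xi>)
   + c * (death_rate \<xi> x + birth_rate N a b M \<xi> x)"

lemma site_origin:
  assumes "good N \<xi>" "al \<ge> 0" "be \<ge> 0" "v \<ge> 0" "c \<ge> 0"
  shows "site al be v c \<xi> 0 \<le> (if \<xi> 0 = 0 then 0 else -2*be + c*N*(1+a))"
proof (cases "\<xi> 0 = 0")
  case True
  then show ?thesis unfolding site_def using birth0[OF assms(1), of a b M]
    by (simp add: death_rate_def uk_def)
next
  case False
  define k where "k = \<xi> 0"
  have kN: "k \<le> N" using assms(1) unfolding good_def k_def by simp
  have k1: "1 \<le> k" using False k_def by simp
  define m where "m = real (card (sing \<xi>))"
  have P: "Phi N a al be v \<xi> = al * m + be * psi a N k"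
    unfolding Phi_def m_def k_def using assms(1) by simp
  have Pm: "Phi N a al be v (\<xi>(0 := k - 1)) = al * m + be * psi a N (k - 1)"
    using good_upd0[OF assms(1), of "k-1"] kN unfolding Phi_def m_def by simp
  have up: "uk N a k * (Phi N a al be v (\<xi>(0 := Suc k)) - Phi N a al be v \<xi>)
      = uk N a k * (be * (psi a N (k + 1) - psi a N k))"
  proof (cases "k < N")
    case True
    then have "Phi N a al be v (\<xi>(0 := Suc k)) = al * m + be * psi a N (k+1)"
      using good_upd0[OF assms(1), of "Suc k"] unfolding Phi_def m_def by simp
    then show ?thesis using P by (simp add: algebra_simps)
  next
    case False
    then have "k = N" using kN by simp
    then show ?thesis using uk_N by simp
  qed
  have "site al be v c \<xi> 0 = be * (real k * (psi a N (k - 1) - psi a N k)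
        + uk N a k * (psi a N (k + 1) - psi a N k)) + c * (real k + uk N a k)"
    unfolding site_def death_rate_def birth0[OF assms(1)] using P Pm up k_def
    by (simp add: algebra_simps)
  also have "... \<le> be * (-2) + c * (N * (1 + a))"
  proof (rule add_mono)
    show "be * (real k * (psi a N (k - 1) - psi a N k) + uk N a k * (psi a N (k + 1) - psi a N k))
        \<le> be * (-2)"
      using psi_drift[OF a0 N2 k1 kN] assms by (intro mult_left_mono) auto
    have "uk N a k \<le> a * real k" using uk_bounds[OF a0 N2 kN] by simp
    also have "... \<le> a * N" using kN a0 by (intro mult_left_mono) auto
    finally have "real k + uk N a k \<le> N * (1 + a)" using kN by (simp add: algebra_simps)
    then show "c * (real k + uk N a k) \<le> c * (N * (1 + a))"
      using assms by (intro mult_left_mono) auto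
  qed
  finally show ?thesis using False by simp
qed

lemma site_other:
  assumes "good N \<xi>" "x \<noteq> 0" "al \<ge> 0" "be \<ge> 0" "v \<ge> 0" "c \<ge> 0"
    and C1: "-al + c + (real N - 1) * (b / (2 * real M)) * (v + c) \<le> 0"
  shows "site al be v c \<xi> x \<le> (if \<bar>x\<bar> \<le> int M then N * ck N b M (\<xi> 0) * (al + c) else 0)"
proof -
  have kN: "\<xi> 0 \<le> N" using assms(1) unfolding good_def by simp
  have ck0: "0 \<le> ck N b M (\<xi> 0)" using ck_nonneg b0 N2 by simp
  have ckb: "ck N b M (\<xi> 0) \<le> b / (2 * real M)" using ck_le b0 N2 M1 kN by simp
  show ?thesis
  proof (cases "\<xi> x = 0")
    case True
    have bx: "birth_rate N a b M \<xi> x = (if \<bar>x\<bar> \<le> int M then ck N b M (\<xi> 0) * N else 0)"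
      using birthx[OF assms(1,2)] True by simp
    have "Phi N a al be v (\<xi>(x := Suc (\<xi> x))) = Phi N a al be v \<xi> + al"
    proof -
      have "x \<notin> sing \<xi>" unfolding sing_def using True by simp
      then have "card (sing (\<xi>(x := 1))) = Suc (card (sing \<xi>))"
        using good_born[OF assms(1,2)] good_fin_sing[OF assms(1)] by simp
      moreover have "(\<xi>(x := 1)) 0 = \<xi> 0" using assms(2) by simp
      ultimately show ?thesis using good_born[OF assms(1,2)] assms(1) True
        unfolding Phi_def by (simp add: algebra_simps)
    qed
    then show ?thesis unfolding site_def death_rate_def using True bx
      by (simp add: algebra_simps)
  next
    case False
    then have x1: "\<xi> x = 1" using good_01[OF assms(1,2)] by simp
    define B where "B = birth_rate N a b M \<xi> x"
    have bx: "B = (if \<bar>x\<bar> \<le> int M then ck N b M (\<xi> 0) * (real N - 1) else 0)"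
      unfolding B_def using birthx[OF assms(1,2)] x1 by simp
    have B0: "0 \<le> B" using bx ck0 N2 by simp
    have Bb: "B \<le> (real N - 1) * (b / (2 * real M))"
    proof (cases "\<bar>x\<bar> \<le> int M")
      case True
      then have "B = (real N - 1) * ck N b M (\<xi> 0)" using bx by simp
      also have "... \<le> (real N - 1) * (b / (2 * real M))"
        using ckb N2 by (intro mult_left_mono) auto
      finally show ?thesis .
    next
      case False
      then show ?thesis using bx N2 b0 by simp
    qed
    have xs: "x \<in> sing \<xi>" unfolding sing_def using assms(2) x1 by simp
    have Pd: "Phi N a al be v (\<xi>(x := \<xi> x - 1)) = Phi N a al be v \<xi> - al"
    proof -
      have "card (sing \<xi> - {x}) = card (sing \<xi>) - 1"
        using xs good_fin_sing[OF assms(1)] by simp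
      moreover have "card (sing \<xi>) \<ge> 1" using xs good_fin_sing[OF assms(1)]
        by (metis One_nat_def Suc_leI card_gt_0_iff empty_iff)
      ultimately show ?thesis
        using good_kill[OF assms(1,2)] assms(1,2) x1 unfolding Phi_def
        by (simp add: algebra_simps of_nat_diff)
    qed
    have Pu: "Phi N a al be v (\<xi>(x := Suc (\<xi> x))) = v"
      using not_good2[OF assms(2)] x1 unfolding Phi_def by (simp add: numeral_2_eq_2)
    have Pn: "0 \<le> Phi N a al be v \<xi>" using Phi_nonneg a0 assms by simp
    have "site al be v c \<xi> x = -al + B * (v - Phi N a al be v \<xi>) + c * (1 + B)"
      unfolding site_def death_rate_def B_def[symmetric] using Pd Pu x1 by (simp add: algebra_simps)
    also have "... \<le> -al + c + B * (v + c)"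
      using B0 Pn by (simp add: algebra_simps mult_left_mono)
    also have "... \<le> -al + c + (real N - 1) * (b / (2 * real M)) * (v + c)"
      using Bb assms by (intro add_left_mono mult_right_mono) auto
    also have "... \<le> 0" using C1 .
    finally have "site al be v c \<xi> x \<le> 0" .
    moreover have "0 \<le> real N * ck N b M (\<xi> 0) * (al + c)" using ck0 assms by simp
    ultimately show ?thesis by simp
  qed
qed

end

lemma Pop_scale: "Pop N a b M (\<lambda>\<eta>. c * g \<eta>) \<xi> = c * Pop N a b M g \<xi>"
  by (simp add: Pop_def sum_distrib_left algebra_simps)

lemma Pop_sum: "Pop N a b M (\<lambda>\<eta>. \<Sum>j\<in>J. g j \<eta>) \<xi> = (\<Sum>j\<in>J. Pop N a b M (g j) \<xi>)"
  unfolding Pop_def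
  by (subst sum.swap) (simp add: sum_distrib_left sum.distrib)

context setting
begin

lemma sum_site:
  fixes al be v c :: real
  assumes "good N \<xi>" "al \<ge> 0" "be \<ge> 0" "v \<ge> 0" "c \<ge> 0"
    and C1: "-al + c + (real N - 1) * (b / (2 * real M)) * (v + c) \<le> 0"
    and C2: "-2*be + c*N*(1+a) + N*(al+c)*(2*b) \<le> 0"
  shows "(\<Sum>x\<in>active_sites M \<xi>. site al be v c \<xi> x) \<le> 0"
proof -
  let ?A = "active_sites M \<xi>"
  have fin: "finite ?A" using assms(1) finite_active unfolding good_def by auto
  define K where "K = N * ck N b M (\<xi> 0) * (al + c)"
  define P0 where "P0 = (if \<xi> 0 = 0 then 0 else -2*be + c*N*(1+a))"
  have ck0: "0 \<le> ck N b M (\<xi> 0)" using ck_nonneg b0 N2 by simp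
  have K0: "0 \<le> K" unfolding K_def using ck0 assms by simp
  have pt: "site al be v c \<xi> x \<le> (if x = 0 then P0 else 0) + (if \<bar>x\<bar> \<le> int M then K else 0)" for x
  proof (cases "x = 0")
    case True
    then show ?thesis using site_origin[OF assms(1-5)] K0 unfolding P0_def by auto
  next
    case False
    then show ?thesis using site_other[OF assms(1) False assms(2-5) C1] unfolding K_def by auto
  qed
  have "(\<Sum>x\<in>?A. site al be v c \<xi> x)
      \<le> (\<Sum>x\<in>?A. (if x = 0 then P0 else 0) + (if \<bar>x\<bar> \<le> int M then K else 0))"
    using pt by (intro sum_mono) auto
  also have "... = (if 0 \<in> ?A then P0 else 0) + (\<Sum>x\<in>?A. (if \<bar>x\<bar> \<le> int M then K else 0))"
    using fin by (simp add: sum.distrib sum.delta)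
  also have "(\<Sum>x\<in>?A. (if \<bar>x\<bar> \<le> int M then K else 0)) = real (card {x\<in>?A. \<bar>x\<bar> \<le> int M}) * K"
    using fin by (simp add: sum.inter_filter[symmetric])
  finally have S: "(\<Sum>x\<in>?A. site al be v c \<xi> x)
      \<le> (if 0 \<in> ?A then P0 else 0) + real (card {x\<in>?A. \<bar>x\<bar> \<le> int M}) * K" .
  have card: "card {x\<in>?A. \<bar>x\<bar> \<le> int M} \<le> 2 * M + 1"
  proof -
    have "card {x\<in>?A. \<bar>x\<bar> \<le> int M} \<le> card {- int M .. int M}"
      by (rule card_mono) auto
    also have "... = 2 * M + 1" by simp
    finally show ?thesis .
  qed
  show ?thesis
  proof (cases "\<xi> 0 = 0")
    case True
    then have "K = 0" unfolding K_def using ck_small by simp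
    then show ?thesis using S True unfolding P0_def by (simp split: if_split_asm)
  next
    case False
    then have "0 \<in> ?A" unfolding active_sites_def by force
    then have S2: "(\<Sum>x\<in>?A. site al be v c \<xi> x) \<le> P0 + real (2 * M + 1) * K"
      using S card K0 by (smt (verit) mult_right_mono of_nat_le_iff)
    have kN: "\<xi> 0 \<le> N" using assms(1) unfolding good_def by simp
    have "real (2 * M + 1) * ck N b M (\<xi> 0) \<le> real (2 * M + 1) * (b / (2 * real M))"
      using ck_le[OF _ N2 M1 kN] b0 by (intro mult_left_mono) auto
    also have "... = b + b / (2 * real M)" using M1 by (simp add: field_simps)
    also have "... \<le> 2 * b"
    proof -
      have "b / (2 * real M) \<le> b" using M1 b0 by (simp add: field_simps)
      then show ?thesis by simp
    qed
    finally have ckb: "real (2 * M + 1) * ck N b M (\<xi> 0) \<le> 2 * b" .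
    have "real (2 * M + 1) * K = N * (al + c) * (real (2 * M + 1) * ck N b M (\<xi> 0))"
      unfolding K_def by (simp add: algebra_simps)
    also have "... \<le> N * (al + c) * (2 * b)"
      using ckb assms by (intro mult_left_mono) auto
    finally show ?thesis using S2 C2 False unfolding P0_def by simp
  qed
qed

lemma Pop_Phi:
  fixes al be v c :: real
  assumes "good N \<xi>" "\<xi> \<noteq> (\<lambda>_. 0)" "al \<ge> 0" "be \<ge> 0" "v \<ge> 0" "c \<ge> 0"
    and C1: "-al + c + (real N - 1) * (b / (2 * real M)) * (v + c) \<le> 0"
    and C2: "-2*be + c*N*(1+a) + N*(al+c)*(2*b) \<le> 0"
  shows "Pop N a b M (Phi N a al be v) \<xi> \<le> Phi N a al be v \<xi> - c"
proof -
  let ?g = "Phi N a al be v"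
  let ?R = "total_rate N a b M \<xi>"
  let ?S = "(\<Sum>x\<in>active_sites M \<xi>.
      death_rate \<xi> x * (?g (\<xi>(x := \<xi> x - 1)) - ?g \<xi>)
    + birth_rate N a b M \<xi> x * (?g (\<xi>(x := Suc (\<xi> x))) - ?g \<xi>))"
  have R: "0 < ?R" using total_pos[OF good_valid[OF assms(1)] assms(2)] N2 by simp
  have "(\<Sum>x\<in>active_sites M \<xi>. site al be v c \<xi> x) = ?S + c * ?R"
    unfolding site_def total_rate_def by (simp add: sum.distrib sum_distrib_left distrib_left)
  then have "?S \<le> - c * ?R" using sum_site[OF assms(1,3-6) C1 C2] by simp
  then have "?S / ?R \<le> - c" using R by (simp add: divide_le_eq)
  then show ?thesis using Pop_gen[of N a b M \<xi> ?g] R by simp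
qed

definition TT :: "(int \<Rightarrow> nat) \<Rightarrow> real" where
  "TT = Phi N a (1 + b*N) (N*(1+a) + b*N*(2 + b*N)) 0"

definition HH :: "(int \<Rightarrow> nat) \<Rightarrow> real" where
  "HH \<eta> = (1 / real M) * Phi N a (b*N) ((b*N)^2) (real M) \<eta>"

lemma TT_nonneg: "0 \<le> TT \<eta>"
  unfolding TT_def using a0 b0 by (intro Phi_nonneg) auto

lemma HH_nonneg: "0 \<le> HH \<eta>"
  unfolding HH_def using a0 b0 by (intro mult_nonneg_nonneg Phi_nonneg) auto

lemma HH_bad: "\<not> good N \<eta> \<Longrightarrow> HH \<eta> = 1"
  unfolding HH_def Phi_def using M1 by simp

lemma Pop_TT:
  assumes "good N \<xi>" "\<xi> \<noteq> (\<lambda>_. 0)"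
  shows "Pop N a b M TT \<xi> \<le> TT \<xi> - 1"
  unfolding TT_def
proof (rule Pop_Phi[OF assms])
  show "- (1 + b * real N) + 1 + (real N - 1) * (b / (2 * real M)) * (0 + 1) \<le> 0"
  proof -
    have "(real N - 1) * (b / (2 * real M)) \<le> real N * b"
      using N2 M1 b0 by (intro mult_mono) (auto simp: field_simps)
    then show ?thesis by (simp add: algebra_simps)
  qed
  show "- 2 * (real N * (1 + a) + b * real N * (2 + b * real N)) + 1 * real N * (1 + a) +
    real N * (1 + b * real N + 1) * (2 * b) \<le> 0"
  proof -
    have "0 \<le> a * real N" using a0 by simp
    then show ?thesis by (simp add: algebra_simps)
  qed
qed (use a0 b0 in auto)

lemma Pop_HH:
  assumes "good N \<xi>" "\<xi> \<noteq> (\<lambda>_. 0)"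
  shows "Pop N a b M HH \<xi> \<le> HH \<xi>"
proof -
  have "Pop N a b M (Phi N a (b*N) ((b*N)^2) (real M)) \<xi> \<le> Phi N a (b*N) ((b*N)^2) (real M) \<xi> - 0"
  proof (rule Pop_Phi[OF assms])
    show "- (b * real N) + 0 + (real N - 1) * (b / (2 * real M)) * (real M + 0) \<le> 0"
    proof -
      have "(real N - 1) * (b / (2 * real M)) * real M = (real N - 1) * b / 2"
        using M1 by (simp add: field_simps)
      also have "... \<le> b * real N" using b0 N2 by (simp add: field_simps)
      finally show ?thesis by simp
    qed
    show "- 2 * (b * real N)\<^sup>2 + 0 * real N * (1 + a) + real N * (b * real N + 0) * (2 * b) \<le> 0"
      by (simp add: power2_eq_square algebra_simps)
  qed (use a0 b0 in auto)
  then show ?thesis unfolding HH_def Pop_scale using M1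
    by (simp add: divide_right_mono)
qed

abbreviation f where "f n \<equiv> survive_steps n N a b M"

lemma main_bound:
  assumes "valid N \<xi>"
  shows "(\<Sum>j\<le>n. f j \<xi>) \<le> TT \<xi> + real (n+1) * HH \<xi>"
  using assms
proof (induction n arbitrary: \<xi>)
  case 0
  show ?case
  proof (cases "\<xi> = (\<lambda>_. 0)")
    case True
    then show ?thesis using TT_nonneg HH_nonneg by (simp add: add_nonneg_nonneg)
  next
    case False
    show ?thesis
    proof (cases "good N \<xi>")
      case True
      have "0 = Pop N a b M (\<lambda>_. 0) \<xi>" using Pop_const[OF 0 False] by simp
      also have "... \<le> Pop N a b M TT \<xi>" using TT_nonneg 0 by (intro Pop_mono) auto
      finally have "1 \<le> TT \<xi>" using Pop_TT[OF True False] by simp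
      then show ?thesis using False HH_nonneg[of \<xi>] by simp
    next
      case False
      then show ?thesis using HH_bad[OF False] TT_nonneg[of \<xi>] survive_bounds[OF 0, of 0] by simp
    qed
  qed
next
  case (Suc n)
  show ?case
  proof (cases "\<xi> = (\<lambda>_. 0)")
    case True
    then show ?thesis using TT_nonneg HH_nonneg
      by (simp add: survive_zero add_nonneg_nonneg)
  next
    case nz: False
    show ?thesis
    proof (cases "good N \<xi>")
      case False
      have "(\<Sum>j\<le>Suc n. f j \<xi>) \<le> (\<Sum>j\<le>Suc n. 1)"
        using survive_bounds[OF Suc.prems] by (intro sum_mono) auto
      then show ?thesis using HH_bad[OF False] TT_nonneg[of \<xi>] by simp
    next
      case True
      have "(\<Sum>j\<le>Suc n. f j \<xi>) = f 0 \<xi> + (\<Sum>j\<le>n. f (Suc j) \<xi>)"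
        by (rule sum.atMost_Suc_shift)
      also have "... = 1 + (\<Sum>j\<le>n. Pop N a b M (f j) \<xi>)"
        using nz survive_Suc[OF nz] by simp
      also have "... = 1 + Pop N a b M (\<lambda>\<eta>. \<Sum>j\<le>n. f j \<eta>) \<xi>"
        by (simp add: Pop_sum)
      also have "... \<le> 1 + Pop N a b M (\<lambda>\<eta>. TT \<eta> + real (n+1) * HH \<eta>) \<xi>"
        using Suc.IH Suc.prems by (simp add: Pop_mono)
      also have "... = 1 + Pop N a b M TT \<xi> + real (n+1) * Pop N a b M HH \<xi>"
        by (simp add: Pop_lin)
      also have "... \<le> 1 + (TT \<xi> - 1) + real (n+1) * HH \<xi>"
        using Pop_TT[OF True nz] Pop_HH[OF True nz] by (intro add_mono mult_left_mono) auto
      also have "... \<le> TT \<xi> + real (Suc n + 1) * HH \<xi>"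
        using HH_nonneg[of \<xi>] by (simp add: algebra_simps)
      finally show ?thesis .
    qed
  qed
qed

lemma survival_le:
  "survival_prob N a b M \<le> (b*N)^2 * ((a+2)^N - 1) / real M"
proof -
  let ?i = "init_config N"
  have gi: "good N ?i" unfolding good_def init_config_def by auto
  have vi: "valid N ?i" using good_valid[OF gi] N2 by simp
  have si: "sing ?i = {}" unfolding sing_def init_config_def by auto
  have i0: "?i 0 = N" unfolding init_config_def by simp
  have H0: "HH ?i = (b*N)^2 * ((a+2)^N - 1) / real M"
    unfolding HH_def Phi_def psi_def using gi si i0 by simp
  define I where "I = survival_prob N a b M"
  have bdd: "bdd_below (range (\<lambda>n. f n ?i))"
    using survive_bounds[OF vi] by (intro bdd_belowI[of _ 0]) auto
  have Ile: "I \<le> f n ?i" for n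
    unfolding I_def survival_prob_def using bdd by (rule cINF_lower) simp
  have key: "real (n+1) * I \<le> TT ?i + real (n+1) * HH ?i" for n
  proof -
    have "real (n+1) * I = (\<Sum>j\<le>n. I)" by simp
    also have "... \<le> (\<Sum>j\<le>n. f j ?i)" using Ile by (intro sum_mono) auto
    also have "... \<le> TT ?i + real (n+1) * HH ?i" by (rule main_bound[OF vi])
    finally show ?thesis .
  qed
  have "I \<le> HH ?i"
  proof (rule ccontr)
    assume "\<not> I \<le> HH ?i"
    then have d: "0 < I - HH ?i" by simp
    obtain n :: nat where n: "TT ?i / (I - HH ?i) < real n" using reals_Archimedean2 by blast
    then have "TT ?i < real n * (I - HH ?i)" using d by (simp add: divide_less_eq)
    also have "... \<le> real (n+1) * (I - HH ?i)" using d by (intro mult_right_mono) auto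
    also have "... \<le> TT ?i" using key[of n] by (simp add: algebra_simps)
    finally show False by simp
  qed
  then show ?thesis using H0 unfolding I_def by simp
qed

end

lemma rate_bound:
  fixes C :: real and M :: nat
  assumes C0: "C \<ge> 0" and MM: "real M \<ge> (2*C+1)^3" and X: "X \<ge> 0"
  shows "C / real M \<le> real M powr (-1/3) * (1/2 + X)"
proof -
  have M1: "real M \<ge> 1"
  proof -
    have "(1::real) \<le> (2*C+1)^3" using C0 by simp
    then show ?thesis using MM by linarith
  qed
  define t where "t = real M powr (1/3)"
  have t0: "t > 0" unfolding t_def using M1 by simp
  have t3: "t^3 = real M" unfolding t_def using M1 by (simp add: powr_power)
  have tm: "real M powr (-1/3) = 1 / t"
    unfolding t_def using powr_minus_divide[of "real M" "1/3"] by simp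
  have tC: "t \<ge> 2*C+1"
  proof (rule ccontr)
    assume "\<not> t \<ge> 2*C+1"
    then have "t < 2*C+1" by simp
    then have "t^3 < (2*C+1)^3" using t0 by (intro power_strict_mono) auto
    then show False using t3 MM by simp
  qed
  have t1: "t \<ge> 1" using tC C0 by simp
  have "2 * C \<le> t" using tC by simp
  also have "... \<le> t^2" using t1 by (simp add: power2_eq_square)
  finally have c2: "2 * C \<le> t^2" .
  have "C / real M = C / t^3" using t3 by simp
  also have "... \<le> (1/t) / 2"
    using c2 t0 by (simp add: field_simps power3_eq_cube power2_eq_square)
  also have "... \<le> (1/t) * (1/2 + X)"
    using t0 X by (simp add: field_simps)
  finally show ?thesis using tm by simp
qed

theorem theorem2p6:
  fixes a b :: real and N :: nat
  assumes "a \<ge> 0" and "b > 0" and "N \<ge> 2"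
  shows "\<exists>M0::nat. \<forall>M\<ge>M0. survival_prob N a b M \<le>
    (if a < 4 then real M powr (-1/3) * (1/2 + b * real N / (1 - a/4))
     else if a = 4 then real M powr (-1/3) * (1/2 + (b/2) * (real N + 2)^2)
     else real M powr (-1/3) * (1/2 + b / (a/4 - 1)^2 * (a/4)^(N+2)))"
proof -
  define C where "C = (b*N)^2 * ((a+2)^N - 1)"
  have C0: "C \<ge> 0"
  proof -
    have "(1::real) \<le> (a+2)^N" using assms by simp
    then show ?thesis unfolding C_def by simp
  qed
  define X where "X = (if a < 4 then b * real N / (1 - a/4)
     else if a = 4 then (b/2) * (real N + 2)^2
     else b / (a/4 - 1)^2 * (a/4)^(N+2))"
  have X0: "X \<ge> 0" unfolding X_def using assms by auto
  have rhs: "(if a < 4 then real M powr (-1/3) * (1/2 + b * real N / (1 - a/4))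
     else if a = 4 then real M powr (-1/3) * (1/2 + (b/2) * (real N + 2)^2)
     else real M powr (-1/3) * (1/2 + b / (a/4 - 1)^2 * (a/4)^(N+2)))
     = real M powr (-1/3) * (1/2 + X)" for M :: nat
    unfolding X_def by simp
  show ?thesis
  proof (intro exI allI impI)
    fix M :: nat
    assume "M \<ge> nat \<lceil>(2*C+1)^3\<rceil>"
    then have MM: "real M \<ge> (2*C+1)^3" by linarith
    have "(1::real) \<le> (2*C+1)^3" using C0 by simp
    then have M1: "M \<ge> 1" using MM by linarith
    interpret setting N a b M using assms M1 by unfold_locales auto
    have "survival_prob N a b M \<le> C / real M" unfolding C_def by (rule survival_le)
    also have "... \<le> real M powr (-1/3) * (1/2 + X)" by (rule rate_bound[OF C0 MM X0])
    finally show "survival_prob N a b M \<le>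
    (if a < 4 then real M powr (-1/3) * (1/2 + b * real N / (1 - a/4))
     else if a = 4 then real M powr (-1/3) * (1/2 + (b/2) * (real N + 2)^2)
     else real M powr (-1/3) * (1/2 + b / (a/4 - 1)^2 * (a/4)^(N+2)))"
      unfolding rhs .
  qed
qed

end
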